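(* Let $f_1,\dots,f_n\colon(c_1,c_2)\to\mathbb R$ and $\eta\colon(c_1,c_2)\times\mathbb R\to(0,\infty)$ be smooth. The manifold $(c_1,c_2)\times\mathbb R^{n+1}$ with the metric $(\star)$ is complete if $(c_1,c_2)=\mathbb R$ and there exists a positive continuous function $r\colon\mathbb R\to(0,\infty)$ with $\eta(x,u)\ge r(u)$ for all $x,u$.
   Context: The metric $(\star)$: on $(c_1,c_2)\times\mathbb R^{n+1}$ with coordinates $(x,u,v_1,\dots,v_n)$, with conventions $v_0=u$, $v_{-1}=v_{n+1}=0$, $f_0=f_{n+1}=0$, $g_{\eta,f}=\eta(x,u)^2dx^2+\sum_{j=0}^n\big(dv_j+(v_{j-1}f_j(x)-v_{j+1}f_{j+1}(x))dx\big)^2$. *)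

theory Defs
  imports "HOL-Analysis.Analysis"
begin

fun Ck :: "nat \<Rightarrow> ('a::euclidean_space \<Rightarrow> real) \<Rightarrow> bool" where
  "Ck 0 h \<longleftrightarrow> continuous_on UNIV h"
| "Ck (Suc k) h \<longleftrightarrow> (\<forall>p. h differentiable (at p)) \<and>
      (\<forall>b\<in>Basis. Ck k (\<lambda>p. frechet_derivative h (at p) b))"

definition smooth :: "('a::euclidean_space \<Rightarrow> real) \<Rightarrow> bool" where
  "smooth h \<longleftrightarrow> (\<forall>k. Ck k h)"

(* C^1 curve component (on all of R; any C^1 curve on [0,1] extends to one) *)
definition C1curve :: "(real \<Rightarrow> real) \<Rightarrow> bool" where
  "C1curve h \<longleftrightarrow> (\<forall>t. (h has_real_derivative deriv h t) (at t)) \<and> continuous_on UNIV (deriv h)"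

definition fext :: "nat \<Rightarrow> (nat \<Rightarrow> real \<Rightarrow> real) \<Rightarrow> nat \<Rightarrow> real \<Rightarrow> real" where
  "fext n f j = (if 1 \<le> j \<and> j \<le> n then f j else (\<lambda>_. 0))"

(* v_j with v_{-1} = v_{n+1} = 0; here v 0 = u *)
definition vprev :: "(nat \<Rightarrow> real) \<Rightarrow> nat \<Rightarrow> real" where
  "vprev v j = (if j = 0 then 0 else v (j - 1))"

definition vnext :: "nat \<Rightarrow> (nat \<Rightarrow> real) \<Rightarrow> nat \<Rightarrow> real" where
  "vnext n v j = (if j + 1 \<le> n then v (j + 1) else 0)"

(* the quadratic form g_{eta,f} at the point (x, v_0 = u, v_1, ..., v_n)
   evaluated on the tangent vector (dx, dv_0, ..., dv_n) *)
definition gform :: "nat \<Rightarrow> (real \<Rightarrow> real \<Rightarrow> real) \<Rightarrow> (nat \<Rightarrow> real \<Rightarrow> real)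
    \<Rightarrow> real \<Rightarrow> (nat \<Rightarrow> real) \<Rightarrow> real \<Rightarrow> (nat \<Rightarrow> real) \<Rightarrow> real" where
  "gform n \<eta> f x v dx dv =
     (\<eta> x (v 0))\<^sup>2 * dx\<^sup>2 +
     (\<Sum>j\<le>n. (dv j + (vprev v j * fext n f j x - vnext n v j * fext n f (j + 1) x) * dx)\<^sup>2)"

definition Mpts :: "nat \<Rightarrow> (real \<times> (nat \<Rightarrow> real)) set" where
  "Mpts n = {(x, v). \<forall>j>n. v j = 0}"

definition curves :: "nat \<Rightarrow> real \<times> (nat \<Rightarrow> real) \<Rightarrow> real \<times> (nat \<Rightarrow> real)
    \<Rightarrow> ((real \<Rightarrow> real) \<times> (nat \<Rightarrow> real \<Rightarrow> real)) set" where
  "curves n p q = {(X, V). C1curve X \<and> (\<forall>j\<le>n. C1curve (V j)) \<and>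
      X 0 = fst p \<and> X 1 = fst q \<and> (\<forall>j\<le>n. V j 0 = snd p j \<and> V j 1 = snd q j)}"

definition glength :: "nat \<Rightarrow> (real \<Rightarrow> real \<Rightarrow> real) \<Rightarrow> (nat \<Rightarrow> real \<Rightarrow> real)
    \<Rightarrow> (real \<Rightarrow> real) \<Rightarrow> (nat \<Rightarrow> real \<Rightarrow> real) \<Rightarrow> real" where
  "glength n \<eta> f X V = integral {0..1}
     (\<lambda>t. sqrt (gform n \<eta> f (X t) (\<lambda>j. V j t) (deriv X t) (\<lambda>j. deriv (V j) t)))"

definition gdist :: "nat \<Rightarrow> (real \<Rightarrow> real \<Rightarrow> real) \<Rightarrow> (nat \<Rightarrow> real \<Rightarrow> real)
    \<Rightarrow> real \<times> (nat \<Rightarrow> real) \<Rightarrow> real \<times> (nat \<Rightarrow> real) \<Rightarrow> real" where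
  "gdist n \<eta> f p q = Inf ((\<lambda>(X, V). glength n \<eta> f X V) ` curves n p q)"

definition gcomplete :: "nat \<Rightarrow> (real \<Rightarrow> real \<Rightarrow> real) \<Rightarrow> (nat \<Rightarrow> real \<Rightarrow> real) \<Rightarrow> bool" where
  "gcomplete n \<eta> f \<longleftrightarrow>
     (\<forall>P :: nat \<Rightarrow> real \<times> (nat \<Rightarrow> real).
        (\<forall>k. P k \<in> Mpts n) \<and>
        (\<forall>e>0. \<exists>N. \<forall>m\<ge>N. \<forall>k\<ge>N. gdist n \<eta> f (P m) (P k) < e)
        \<longrightarrow> (\<exists>p\<in>Mpts n. (\<lambda>k. gdist n \<eta> f (P k) p) \<longlonglongrightarrow> 0))"

end

theory Submission imports Defs begin

lemma deriv_bound_integral: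
  fixes h h' g :: "real \<Rightarrow> real"
  assumes hd: "\<And>t. (h has_real_derivative h' t) (at t)"
    and gc: "continuous_on {0..1} g"
    and hb: "\<And>t. t \<in> {0..1} \<Longrightarrow> \<bar>h' t\<bar> \<le> C * g t"
    and g0: "\<And>t. t \<in> {0..1} \<Longrightarrow> 0 \<le> g t"
    and C0: "0 \<le> C"
    and t: "t \<in> {0..1}"
  shows "\<bar>h t - h 0\<bar> \<le> C * integral {0..1} g"
proof -
  have t0: "0 \<le> t" and t1: "t \<le> 1" using t by auto
  have ftc: "(h' has_integral (h t - h 0)) {0..t}"
    by (rule fundamental_theorem_of_calculus[OF t0])
       (metis hd has_field_derivative_at_within has_real_derivative_iff_has_vector_derivative)
  have sub: "{0..t} \<subseteq> {0..1}" using t1 by auto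
  have gi1: "g integrable_on {0..1}" using gc integrable_continuous_real by blast
  have gi: "g integrable_on {0..t}" using integrable_on_subinterval[OF gi1 sub] .
  have Cg: "((\<lambda>s. C * g s) has_integral C * integral {0..t} g) {0..t}"
    using has_integral_mult_right[OF integrable_integral[OF gi]] by simp
  have ng: "((\<lambda>s. - h' s) has_integral - (h t - h 0)) {0..t}"
    using has_integral_neg[OF ftc] by simp
  have le1: "h t - h 0 \<le> C * integral {0..t} g"
    by (rule has_integral_le[OF ftc Cg]) (use hb sub in force)
  have le2: "- (h t - h 0) \<le> C * integral {0..t} g"
    by (rule has_integral_le[OF ng Cg]) (use hb sub in force)
  have "integral {0..t} g \<le> integral {0..1} g"
    by (rule integral_subset_le[OF sub gi gi1]) (use g0 in auto)
  hence "C * integral {0..t} g \<le> C * integral {0..1} g" using C0 by (simp add: mult_left_mono)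
  thus ?thesis using le1 le2 by linarith
qed

lemma telescope:
  fixes v F :: "nat \<Rightarrow> real"
  shows "(\<Sum>j\<le>n. v j * (vprev v j * F j - vnext n v j * F (j+1))) = 0"
proof -
  have a: "(\<Sum>j\<le>n. v j * vprev v j * F j) = (\<Sum>i<n. v i * v (i+1) * F (i+1))"
  proof (cases n)
    case 0 then show ?thesis by (simp add: vprev_def)
  next
    case (Suc m)
    have "(\<Sum>j\<le>n. v j * vprev v j * F j) = v 0 * vprev v 0 * F 0 + (\<Sum>i\<le>m. v (Suc i) * vprev v (Suc i) * F (Suc i))"
      unfolding Suc by (rule sum.atMost_Suc_shift)
    also have "\<dots> = (\<Sum>i\<le>m. v i * v (i+1) * F (i+1))" by (simp add: vprev_def ac_simps)
    finally show ?thesis using Suc by (simp add: lessThan_Suc_atMost)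
  qed
  have b: "(\<Sum>j\<le>n. v j * vnext n v j * F (j+1)) = (\<Sum>i<n. v i * v (i+1) * F (i+1))"
  proof -
    have "(\<Sum>j\<le>n. v j * vnext n v j * F (j+1)) = (\<Sum>j<n. v j * vnext n v j * F (j+1)) + v n * vnext n v n * F (n+1)"
      by (simp add: lessThan_Suc_atMost[symmetric])
    also have "\<dots> = (\<Sum>i<n. v i * v (i+1) * F (i+1))" by (simp add: vnext_def)
    finally show ?thesis .
  qed
  show ?thesis using a b by (simp add: algebra_simps sum_subtractf)
qed


definition gint :: "nat \<Rightarrow> (real \<Rightarrow> real \<Rightarrow> real) \<Rightarrow> (nat \<Rightarrow> real \<Rightarrow> real)
    \<Rightarrow> (real \<Rightarrow> real) \<Rightarrow> (nat \<Rightarrow> real \<Rightarrow> real) \<Rightarrow> real \<Rightarrow> real" where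
  "gint n \<eta> f X V t = sqrt (gform n \<eta> f (X t) (\<lambda>j. V j t) (deriv X t) (\<lambda>j. deriv (V j) t))"

definition theta :: "nat \<Rightarrow> (nat \<Rightarrow> real \<Rightarrow> real)
    \<Rightarrow> (real \<Rightarrow> real) \<Rightarrow> (nat \<Rightarrow> real \<Rightarrow> real) \<Rightarrow> nat \<Rightarrow> real \<Rightarrow> real" where
  "theta n f X V j t = deriv (V j) t + (vprev (\<lambda>j. V j t) j * fext n f j (X t)
       - vnext n (\<lambda>j. V j t) j * fext n f (j + 1) (X t)) * deriv X t"

lemma glength_gint: "glength n \<eta> f X V = integral {0..1} (gint n \<eta> f X V)"
  unfolding glength_def gint_def ..

lemma gform_theta: "gform n \<eta> f (X t) (\<lambda>j. V j t) (deriv X t) (\<lambda>j. deriv (V j) t)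
   = (\<eta> (X t) (V 0 t))\<^sup>2 * (deriv X t)\<^sup>2 + (\<Sum>j\<le>n. (theta n f X V j t)\<^sup>2)"
  unfolding gform_def theta_def by simp

lemma gint_nonneg: "0 \<le> gint n \<eta> f X V t"
  unfolding gint_def gform_theta by (intro real_sqrt_ge_zero add_nonneg_nonneg sum_nonneg) auto

lemma gint_ge_x: "\<bar>\<eta> (X t) (V 0 t)\<bar> * \<bar>deriv X t\<bar> \<le> gint n \<eta> f X V t"
proof -
  have "sqrt ((\<eta> (X t) (V 0 t))\<^sup>2 * (deriv X t)\<^sup>2) \<le> gint n \<eta> f X V t"
    unfolding gint_def gform_theta by (rule real_sqrt_le_mono) (simp add: sum_nonneg)
  thus ?thesis by (simp add: real_sqrt_mult abs_mult)
qed

lemma gint_ge_theta_sum: "sqrt (\<Sum>j\<le>n. (theta n f X V j t)\<^sup>2) \<le> gint n \<eta> f X V t"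
  unfolding gint_def gform_theta by (rule real_sqrt_le_mono) simp

lemma gint_ge_theta: assumes "j \<le> n" shows "\<bar>theta n f X V j t\<bar> \<le> gint n \<eta> f X V t"
proof -
  have "(theta n f X V j t)\<^sup>2 \<le> (\<Sum>j\<le>n. (theta n f X V j t)\<^sup>2)"
    by (rule member_le_sum) (use assms in auto)
  hence "sqrt ((theta n f X V j t)\<^sup>2) \<le> sqrt (\<Sum>j\<le>n. (theta n f X V j t)\<^sup>2)"
    by (rule real_sqrt_le_mono)
  thus ?thesis using gint_ge_theta_sum[of n f X V t \<eta>] by simp
qed

lemma C1curve_cont: "C1curve h \<Longrightarrow> continuous_on UNIV h"
  unfolding C1curve_def
  by (meson DERIV_isCont continuous_at_imp_continuous_on)

lemma C1curve_dcont: "C1curve h \<Longrightarrow> continuous_on UNIV (deriv h)"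
  unfolding C1curve_def by blast

lemma gint_cont:
  assumes ec: "continuous_on UNIV (\<lambda>(x, u). \<eta> x u)"
    and fc: "\<And>j. continuous_on UNIV (fext n f j)"
    and cv: "(X, V) \<in> curves n p q"
  shows "continuous_on UNIV (gint n \<eta> f X V)"
proof -
  have X: "C1curve X" and Vs: "\<And>j. j \<le> n \<Longrightarrow> C1curve (V j)" using cv unfolding curves_def by auto
  have Xc: "continuous_on UNIV X" and Xd: "continuous_on UNIV (deriv X)"
    using C1curve_cont[OF X] C1curve_dcont[OF X] by auto
  have Vc: "\<And>j. j \<le> n \<Longrightarrow> continuous_on UNIV (V j)" using C1curve_cont Vs by blast
  have Vd: "\<And>j. j \<le> n \<Longrightarrow> continuous_on UNIV (deriv (V j))" using C1curve_dcont Vs by blast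
  have vp: "continuous_on UNIV (\<lambda>t. vprev (\<lambda>j. V j t) j)" if "j \<le> n" for j
    using that Vc[of "j - 1"] by (cases "j = 0") (auto simp: vprev_def)
  have vn: "continuous_on UNIV (\<lambda>t. vnext n (\<lambda>j. V j t) j)" for j
    using Vc[of "j + 1"] by (cases "j + 1 \<le> n") (auto simp: vnext_def)
  have fx: "continuous_on UNIV (\<lambda>t. fext n f j (X t))" for j
    using continuous_on_compose2[OF fc Xc] by auto
  have th: "continuous_on UNIV (\<lambda>t. theta n f X V j t)" if "j \<le> n" for j
    unfolding theta_def using that
    by (intro continuous_intros Vd vp vn fx Xd)
  have e: "continuous_on UNIV (\<lambda>t. \<eta> (X t) (V 0 t))"
  proof -
    have "continuous_on UNIV (\<lambda>t. (X t, V 0 t))" using Xc Vc[of 0] by (intro continuous_intros) auto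
    from continuous_on_compose2[OF ec this] show ?thesis by auto
  qed
  show ?thesis
    unfolding gint_def[abs_def] gform_theta
    by (intro continuous_intros e Xd th) auto
qed


lemma theta_sum:
  "(\<Sum>j\<le>n. V j t * theta n f X V j t) = (\<Sum>j\<le>n. V j t * deriv (V j) t)"
proof -
  have "(\<Sum>j\<le>n. V j t * theta n f X V j t) = (\<Sum>j\<le>n. V j t * deriv (V j) t)
     + deriv X t * (\<Sum>j\<le>n. (\<lambda>j. V j t) j * (vprev (\<lambda>j. V j t) j * fext n f j (X t)
       - vnext n (\<lambda>j. V j t) j * fext n f (j + 1) (X t)))"
    unfolding theta_def sum_distrib_left sum.distrib[symmetric] by (rule sum.cong) (auto simp: algebra_simps)
  also have "\<dots> = (\<Sum>j\<le>n. V j t * deriv (V j) t)"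
    using telescope[of "\<lambda>j. V j t" "\<lambda>j. fext n f j (X t)" n] by simp
  finally show ?thesis .
qed

lemma rho_bound:
  assumes ec: "continuous_on UNIV (\<lambda>(x, u). \<eta> x u)"
    and fc: "\<And>j. continuous_on UNIV (fext n f j)"
    and cv: "(X, V) \<in> curves n p q"
    and t: "t \<in> {0..1}"
  shows "sqrt (1 + (\<Sum>j\<le>n. (V j t)\<^sup>2)) \<le> sqrt (1 + (\<Sum>j\<le>n. (snd p j)\<^sup>2)) + glength n \<eta> f X V"
proof -
  have Vs: "\<And>j. j \<le> n \<Longrightarrow> C1curve (V j)" and V0: "\<And>j. j \<le> n \<Longrightarrow> V j 0 = snd p j"
    using cv unfolding curves_def by auto
  have Vd: "\<And>j s. j \<le> n \<Longrightarrow> (V j has_real_derivative deriv (V j) s) (at s)"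
    using Vs unfolding C1curve_def by blast
  define rho where "rho s = (\<Sum>j\<le>n. (V j s)\<^sup>2)" for s
  have rho0: "0 \<le> rho s" for s unfolding rho_def by (simp add: sum_nonneg)
  define h' where "h' s = (\<Sum>j\<le>n. V j s * deriv (V j) s) / sqrt (1 + rho s)" for s
  have rd: "(rho has_real_derivative (\<Sum>j\<le>n. 2 * V j s * deriv (V j) s)) (at s)" for s
    unfolding rho_def
    by (rule derivative_eq_intros Vd | simp add: ac_simps)+
  have hd: "((\<lambda>s. sqrt (1 + rho s)) has_real_derivative h' s) (at s)" for s
  proof -
    have pos: "0 < 1 + rho s" using rho0[of s] by simp
    have "((\<lambda>s. sqrt (1 + rho s)) has_real_derivative
         inverse (sqrt (1 + rho s)) / 2 * (\<Sum>j\<le>n. 2 * V j s * deriv (V j) s)) (at s)"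
    proof (rule DERIV_chain2[where g="\<lambda>s. 1 + rho s", OF DERIV_real_sqrt[OF pos]])
      show "((\<lambda>s. 1 + rho s) has_real_derivative (\<Sum>j\<le>n. 2 * V j s * deriv (V j) s)) (at s)"
        using DERIV_add[OF DERIV_const rd] by simp
    qed
    moreover have "inverse (sqrt (1 + rho s)) / 2 * (\<Sum>j\<le>n. 2 * V j s * deriv (V j) s) = h' s"
      unfolding h'_def by (simp add: sum_distrib_left sum_divide_distrib field_simps)
    ultimately show ?thesis by simp
  qed
  have hb: "\<bar>h' s\<bar> \<le> 1 * gint n \<eta> f X V s" for s
  proof -
    have "\<bar>\<Sum>j\<le>n. V j s * deriv (V j) s\<bar> = \<bar>\<Sum>j\<le>n. V j s * theta n f X V j s\<bar>"
      using theta_sum by metis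
    also have "\<dots> \<le> (\<Sum>j\<le>n. \<bar>V j s\<bar> * \<bar>theta n f X V j s\<bar>)"
      by (metis (no_types, lifting) abs_mult sum.cong sum_abs)
    also have "\<dots> \<le> L2_set (\<lambda>j. V j s) {..n} * L2_set (\<lambda>j. theta n f X V j s) {..n}"
      by (rule L2_set_mult_ineq)
    also have "\<dots> \<le> sqrt (1 + rho s) * gint n \<eta> f X V s"
    proof (rule mult_mono)
      show "L2_set (\<lambda>j. V j s) {..n} \<le> sqrt (1 + rho s)" unfolding L2_set_def rho_def by simp
      show "L2_set (\<lambda>j. theta n f X V j s) {..n} \<le> gint n \<eta> f X V s"
        unfolding L2_set_def by (rule gint_ge_theta_sum)
    qed (use rho0[of s] in \<open>auto simp: L2_set_def sum_nonneg\<close>)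
    finally have "\<bar>\<Sum>j\<le>n. V j s * deriv (V j) s\<bar> \<le> sqrt (1 + rho s) * gint n \<eta> f X V s" .
    moreover have "0 < sqrt (1 + rho s)" using rho0[of s] by simp
    ultimately show ?thesis unfolding h'_def by (simp add: abs_divide pos_divide_le_eq mult.commute)
  qed
  have gc: "continuous_on {0..1} (gint n \<eta> f X V)"
    using gint_cont[OF ec fc cv] continuous_on_subset by blast
  have "\<bar>sqrt (1 + rho t) - sqrt (1 + rho 0)\<bar> \<le> 1 * integral {0..1} (gint n \<eta> f X V)"
    by (rule deriv_bound_integral[where h'=h', OF hd gc hb gint_nonneg _ t]) simp
  moreover have "rho 0 = (\<Sum>j\<le>n. (snd p j)\<^sup>2)" unfolding rho_def using V0 by simp
  ultimately show ?thesis unfolding glength_gint rho_def[symmetric] by simp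
qed


lemma x_bound:
  assumes ec: "continuous_on UNIV (\<lambda>(x, u). \<eta> x u)"
    and fc: "\<And>j. continuous_on UNIV (fext n f j)"
    and cv: "(X, V) \<in> curves n p q"
    and M: "0 < M"
    and eb: "\<And>s. s \<in> {0..1} \<Longrightarrow> M \<le> \<eta> (X s) (V 0 s)"
    and t: "t \<in> {0..1}"
  shows "\<bar>X t - fst p\<bar> \<le> glength n \<eta> f X V / M"
proof -
  have X: "C1curve X" and X0: "X 0 = fst p" using cv unfolding curves_def by auto
  have Xd: "\<And>s. (X has_real_derivative deriv X s) (at s)" using X unfolding C1curve_def by blast
  have gc: "continuous_on {0..1} (gint n \<eta> f X V)"
    using gint_cont[OF ec fc cv] continuous_on_subset by blast
  have hb: "\<bar>deriv X s\<bar> \<le> (1/M) * gint n \<eta> f X V s" if s: "s \<in> {0..1}" for s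
  proof -
    have "M * \<bar>deriv X s\<bar> \<le> \<bar>\<eta> (X s) (V 0 s)\<bar> * \<bar>deriv X s\<bar>"
      using eb[OF s] M by (intro mult_right_mono) auto
    also have "\<dots> \<le> gint n \<eta> f X V s" by (rule gint_ge_x)
    finally show ?thesis using M by (simp add: field_simps)
  qed
  have "\<bar>X t - X 0\<bar> \<le> (1/M) * integral {0..1} (gint n \<eta> f X V)"
    by (rule deriv_bound_integral[OF Xd gc hb gint_nonneg _ t]) (use M in auto)
  thus ?thesis unfolding X0 glength_gint by simp
qed

lemma v_bound:
  assumes ec: "continuous_on UNIV (\<lambda>(x, u). \<eta> x u)"
    and fc: "\<And>j. continuous_on UNIV (fext n f j)"
    and cv: "(X, V) \<in> curves n p q"
    and M: "0 < M"
    and eb: "\<And>s. s \<in> {0..1} \<Longrightarrow> M \<le> \<eta> (X s) (V 0 s)"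
    and fb: "\<And>s j. s \<in> {0..1} \<Longrightarrow> \<bar>fext n f j (X s)\<bar> \<le> F"
    and vb: "\<And>s j. s \<in> {0..1} \<Longrightarrow> j \<le> n \<Longrightarrow> \<bar>V j s\<bar> \<le> R"
    and F: "0 \<le> F" and R: "0 \<le> R"
    and j: "j \<le> n"
    and t: "t \<in> {0..1}"
  shows "\<bar>V j t - snd p j\<bar> \<le> (1 + 2 * R * F / M) * glength n \<eta> f X V"
proof -
  have Vj: "C1curve (V j)" and V0: "V j 0 = snd p j" using cv j unfolding curves_def by auto
  have Vd: "\<And>s. (V j has_real_derivative deriv (V j) s) (at s)" using Vj unfolding C1curve_def by blast
  have gc: "continuous_on {0..1} (gint n \<eta> f X V)"
    using gint_cont[OF ec fc cv] continuous_on_subset by blast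
  have hb: "\<bar>deriv (V j) s\<bar> \<le> (1 + 2 * R * F / M) * gint n \<eta> f X V s" if s: "s \<in> {0..1}" for s
  proof -
    define c where "c = vprev (\<lambda>j. V j s) j * fext n f j (X s) - vnext n (\<lambda>j. V j s) j * fext n f (j + 1) (X s)"
    have vp: "\<bar>vprev (\<lambda>j. V j s) j\<bar> \<le> R" using vb[OF s, of "j - 1"] j R by (auto simp: vprev_def)
    have vn: "\<bar>vnext n (\<lambda>j. V j s) j\<bar> \<le> R" using vb[OF s, of "j + 1"] R by (auto simp: vnext_def)
    have "\<bar>c\<bar> \<le> \<bar>vprev (\<lambda>j. V j s) j\<bar> * \<bar>fext n f j (X s)\<bar> + \<bar>vnext n (\<lambda>j. V j s) j\<bar> * \<bar>fext n f (j + 1) (X s)\<bar>"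
      unfolding c_def by (simp add: abs_mult[symmetric] abs_triangle_ineq4)
    also have "\<dots> \<le> R * F + R * F"
      by (intro add_mono mult_mono vp vn fb[OF s]) (use R in auto)
    finally have cb: "\<bar>c\<bar> \<le> 2 * R * F" by (simp add: ac_simps)
    have xb: "M * \<bar>deriv X s\<bar> \<le> gint n \<eta> f X V s"
    proof -
      have "M * \<bar>deriv X s\<bar> \<le> \<bar>\<eta> (X s) (V 0 s)\<bar> * \<bar>deriv X s\<bar>"
        using eb[OF s] M by (intro mult_right_mono) auto
      also have "\<dots> \<le> gint n \<eta> f X V s" by (rule gint_ge_x)
      finally show ?thesis .
    qed
    have th: "deriv (V j) s = theta n f X V j s - c * deriv X s" unfolding theta_def c_def by simp
    have "\<bar>deriv (V j) s\<bar> \<le> \<bar>theta n f X V j s\<bar> + \<bar>c\<bar> * \<bar>deriv X s\<bar>"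
      unfolding th by (simp add: abs_mult[symmetric] abs_triangle_ineq4)
    also have "\<dots> \<le> gint n \<eta> f X V s + 2 * R * F * \<bar>deriv X s\<bar>"
      by (intro add_mono gint_ge_theta j mult_right_mono cb) auto
    also have "2 * R * F * \<bar>deriv X s\<bar> \<le> 2 * R * F / M * gint n \<eta> f X V s"
    proof -
      have "2 * R * F * (M * \<bar>deriv X s\<bar>) \<le> 2 * R * F * gint n \<eta> f X V s"
        by (rule mult_left_mono[OF xb]) (use R F in auto)
      thus ?thesis using M by (simp add: field_simps)
    qed
    finally show ?thesis by (simp add: algebra_simps)
  qed
  have "\<bar>V j t - V j 0\<bar> \<le> (1 + 2 * R * F / M) * integral {0..1} (gint n \<eta> f X V)"
    by (rule deriv_bound_integral[OF Vd gc hb gint_nonneg _ t]) (use M R F in auto)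
  thus ?thesis unfolding V0 glength_gint by simp
qed


definition lineX :: "real \<times> (nat \<Rightarrow> real) \<Rightarrow> real \<times> (nat \<Rightarrow> real) \<Rightarrow> real \<Rightarrow> real" where
  "lineX p q t = fst p + t * (fst q - fst p)"

definition lineV :: "real \<times> (nat \<Rightarrow> real) \<Rightarrow> real \<times> (nat \<Rightarrow> real) \<Rightarrow> nat \<Rightarrow> real \<Rightarrow> real" where
  "lineV p q j t = snd p j + t * (snd q j - snd p j)"

lemma lin_deriv: "((\<lambda>t. a + t * (b - a)) has_real_derivative (b - a)) (at t)"
  by (rule derivative_eq_intros | simp)+

lemma lin_deriv_eq: "deriv (\<lambda>t::real. a + t * (b - a)) t = b - a"
  by (rule DERIV_imp_deriv[OF lin_deriv])

lemma lin_C1: "C1curve (\<lambda>t::real. a + t * (b - a))"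
  unfolding C1curve_def lin_deriv_eq using lin_deriv by auto

lemma line_in_curves: "(lineX p q, lineV p q) \<in> curves n p q"
  unfolding curves_def lineX_def[abs_def] lineV_def[abs_def] using lin_C1 by auto

lemma deriv_lineX: "deriv (lineX p q) t = fst q - fst p"
  unfolding lineX_def[abs_def] by (rule lin_deriv_eq)

lemma deriv_lineV: "deriv (lineV p q j) t = snd q j - snd p j"
  unfolding lineV_def[abs_def] by (rule lin_deriv_eq)

lemma glength_nonneg: "0 \<le> glength n \<eta> f X V"
  unfolding glength_gint
  by (cases "gint n \<eta> f X V integrable_on {0..1}")
     (auto intro: integral_nonneg gint_nonneg simp: not_integrable_integral)

lemma curves_ne: "curves n p q \<noteq> {}" using line_in_curves by blast

lemma gdist_le_glength:
  assumes "(X, V) \<in> curves n p q"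
  shows "gdist n \<eta> f p q \<le> glength n \<eta> f X V"
  unfolding gdist_def
proof (rule cInf_lower)
  show "glength n \<eta> f X V \<in> (\<lambda>(X, V). glength n \<eta> f X V) ` curves n p q"
    using assms by force
  show "bdd_below ((\<lambda>(X, V). glength n \<eta> f X V) ` curves n p q)"
    by (rule bdd_belowI[where m=0]) (auto simp: glength_nonneg)
qed

lemma gdist_nonneg: "0 \<le> gdist n \<eta> f p q"
  unfolding gdist_def
  by (rule cInf_greatest) (use curves_ne in \<open>auto simp: glength_nonneg\<close>)

lemma gdist_lessD:
  assumes "gdist n \<eta> f p q < e"
  shows "\<exists>X V. (X, V) \<in> curves n p q \<and> glength n \<eta> f X V < e"
proof -
  have "(\<lambda>(X, V). glength n \<eta> f X V) ` curves n p q \<noteq> {}" using curves_ne by blast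
  from cInf_lessD[OF this assms[unfolded gdist_def]] show ?thesis by auto
qed

lemma line_bound:
  assumes ec: "continuous_on UNIV (\<lambda>(x, u). \<eta> x u)"
    and fc: "\<And>j. continuous_on UNIV (fext n f j)"
    and eb: "\<And>t. t \<in> {0..1} \<Longrightarrow> \<bar>\<eta> (lineX p q t) (lineV p q 0 t)\<bar> \<le> H"
    and fb: "\<And>t j. t \<in> {0..1} \<Longrightarrow> \<bar>fext n f j (lineX p q t)\<bar> \<le> F"
    and vb: "\<And>t j. t \<in> {0..1} \<Longrightarrow> j \<le> n \<Longrightarrow> \<bar>lineV p q j t\<bar> \<le> R"
    and F: "0 \<le> F" and R: "0 \<le> R"
  shows "gdist n \<eta> f p q \<le> (H + real (n + 1) * (2 * R * F)) * \<bar>fst q - fst p\<bar> + (\<Sum>j\<le>n. \<bar>snd q j - snd p j\<bar>)"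
    (is "_ \<le> ?K")
proof -
  let ?X = "lineX p q" and ?V = "lineV p q"
  have cv: "(?X, ?V) \<in> curves n p q" by (rule line_in_curves)
  have gb: "gint n \<eta> f ?X ?V t \<le> ?K" if t: "t \<in> {0..1}" for t
  proof -
    let ?a = "\<eta> (?X t) (?V 0 t) * deriv ?X t"
    have "gint n \<eta> f ?X ?V t = sqrt (?a\<^sup>2 + (\<Sum>j\<le>n. (theta n f ?X ?V j t)\<^sup>2))"
      unfolding gint_def gform_theta by (simp add: power_mult_distrib)
    also have "\<dots> \<le> sqrt (?a\<^sup>2) + sqrt (\<Sum>j\<le>n. (theta n f ?X ?V j t)\<^sup>2)"
      by (rule sqrt_add_le_add_sqrt) (auto simp: sum_nonneg)
    also have "sqrt (\<Sum>j\<le>n. (theta n f ?X ?V j t)\<^sup>2) \<le> (\<Sum>j\<le>n. \<bar>theta n f ?X ?V j t\<bar>)"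
      using L2_set_le_sum_abs[of "\<lambda>j. theta n f ?X ?V j t" "{..n}"] unfolding L2_set_def .
    also have "(\<Sum>j\<le>n. \<bar>theta n f ?X ?V j t\<bar>) \<le> (\<Sum>j\<le>n. \<bar>snd q j - snd p j\<bar> + 2 * R * F * \<bar>fst q - fst p\<bar>)"
    proof (rule sum_mono)
      fix j assume "j \<in> {..n}" hence j: "j \<le> n" by simp
      define c where "c = vprev (\<lambda>j. ?V j t) j * fext n f j (?X t) - vnext n (\<lambda>j. ?V j t) j * fext n f (j + 1) (?X t)"
      have vp: "\<bar>vprev (\<lambda>j. ?V j t) j\<bar> \<le> R" using vb[OF t, of "j - 1"] j R by (auto simp: vprev_def)
      have vn: "\<bar>vnext n (\<lambda>j. ?V j t) j\<bar> \<le> R" using vb[OF t, of "j + 1"] R by (auto simp: vnext_def)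
      have "\<bar>c\<bar> \<le> \<bar>vprev (\<lambda>j. ?V j t) j\<bar> * \<bar>fext n f j (?X t)\<bar> + \<bar>vnext n (\<lambda>j. ?V j t) j\<bar> * \<bar>fext n f (j + 1) (?X t)\<bar>"
        unfolding c_def by (simp add: abs_mult[symmetric] abs_triangle_ineq4)
      also have "\<dots> \<le> R * F + R * F"
        by (intro add_mono mult_mono vp vn fb[OF t]) (use R in auto)
      finally have cb: "\<bar>c\<bar> \<le> 2 * R * F" by (simp add: ac_simps)
      have "theta n f ?X ?V j t = (snd q j - snd p j) + c * (fst q - fst p)"
        unfolding theta_def c_def deriv_lineX deriv_lineV ..
      hence "\<bar>theta n f ?X ?V j t\<bar> \<le> \<bar>snd q j - snd p j\<bar> + \<bar>c\<bar> * \<bar>fst q - fst p\<bar>"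
        by (simp add: abs_mult[symmetric] abs_triangle_ineq)
      also have "\<dots> \<le> \<bar>snd q j - snd p j\<bar> + 2 * R * F * \<bar>fst q - fst p\<bar>"
        by (intro add_left_mono mult_right_mono cb) auto
      finally show "\<bar>theta n f ?X ?V j t\<bar> \<le> \<bar>snd q j - snd p j\<bar> + 2 * R * F * \<bar>fst q - fst p\<bar>" .
    qed
    also have "sqrt (?a\<^sup>2) \<le> H * \<bar>fst q - fst p\<bar>"
      unfolding real_sqrt_abs abs_mult deriv_lineX by (intro mult_right_mono eb[OF t]) auto
    finally show ?thesis by (simp add: sum.distrib algebra_simps)
  qed
  have gi: "gint n \<eta> f ?X ?V integrable_on {0..1}"
    using gint_cont[OF ec fc cv] integrable_continuous_real continuous_on_subset by blast
  have "glength n \<eta> f ?X ?V \<le> integral {0..1} (\<lambda>_::real. ?K)"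
  proof -
    have ci: "(\<lambda>_. ?K) integrable_on {0..1::real}" by (rule integrable_continuous_real) (rule continuous_on_const)
    show ?thesis unfolding glength_gint
      by (rule Henstock_Kurzweil_Integration.integral_le[OF gi ci gb])
  qed
  also have "\<dots> = ?K" by simp
  finally show ?thesis using gdist_le_glength[OF cv, of \<eta> f] by linarith
qed


lemma comp_le_sqrt:
  fixes w :: "nat \<Rightarrow> real"
  assumes "j \<le> n"
  shows "\<bar>w j\<bar> \<le> sqrt (1 + (\<Sum>i\<le>n. (w i)\<^sup>2))"
proof -
  have "(w j)\<^sup>2 \<le> (\<Sum>i\<le>n. (w i)\<^sup>2)" by (rule member_le_sum) (use assms in auto)
  hence "(w j)\<^sup>2 \<le> 1 + (\<Sum>i\<le>n. (w i)\<^sup>2)" by simp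
  hence "sqrt ((w j)\<^sup>2) \<le> sqrt (1 + (\<Sum>i\<le>n. (w i)\<^sup>2))" by (rule real_sqrt_le_mono)
  thus ?thesis by simp
qed

lemma convex_abs:
  fixes a b c t B :: real
  assumes "\<bar>a - c\<bar> \<le> B" "\<bar>b - c\<bar> \<le> B" "t \<in> {0..1}"
  shows "\<bar>a + t * (b - a) - c\<bar> \<le> B"
proof -
  have t: "0 \<le> t" "t \<le> 1" using assms(3) by auto
  have "a + t * (b - a) - c = (1 - t) * (a - c) + t * (b - c)" by (simp add: algebra_simps)
  hence "\<bar>a + t * (b - a) - c\<bar> \<le> (1 - t) * \<bar>a - c\<bar> + t * \<bar>b - c\<bar>"
    using t by (simp add: abs_mult[symmetric] abs_triangle_ineq order_trans[OF abs_triangle_ineq] abs_mult)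
  also have "\<dots> \<le> (1 - t) * B + t * B"
    using t assms by (intro add_mono mult_left_mono) auto
  finally show ?thesis by (simp add: algebra_simps)
qed


theorem lemma3p2:
  fixes n :: nat and f :: "nat \<Rightarrow> real \<Rightarrow> real" and \<eta> :: "real \<Rightarrow> real \<Rightarrow> real"
    and r :: "real \<Rightarrow> real"
  assumes f_smooth: "\<And>j. 1 \<le> j \<Longrightarrow> j \<le> n \<Longrightarrow> smooth (f j)"
    and eta_smooth: "smooth (\<lambda>(x, u). \<eta> x u)"
    and eta_pos: "\<And>x u. \<eta> x u > 0"
    and r_cont: "continuous_on UNIV r"
    and r_pos: "\<And>u. r u > 0"
    and eta_ge: "\<And>x u. \<eta> x u \<ge> r u"
  shows "gcomplete n \<eta> f"
proof -
  have ec: "continuous_on UNIV (\<lambda>(x, u). \<eta> x u)"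
    using eta_smooth unfolding smooth_def by (metis Ck.simps(1))
  have fcj: "continuous_on UNIV (f j)" if "1 \<le> j" "j \<le> n" for j
    using f_smooth[OF that] unfolding smooth_def by (metis Ck.simps(1))
  have fc: "continuous_on UNIV (fext n f j)" for j
    using fcj[of j] by (auto simp: fext_def)
  show ?thesis unfolding gcomplete_def
  proof (intro allI impI, elim conjE)
    fix P :: "nat \<Rightarrow> real \<times> (nat \<Rightarrow> real)"
    assume PM: "\<forall>k. P k \<in> Mpts n"
      and cau: "\<forall>e>0. \<exists>N. \<forall>m\<ge>N. \<forall>k\<ge>N. gdist n \<eta> f (P m) (P k) < e"
    obtain N where N: "\<And>m k. m \<ge> N \<Longrightarrow> k \<ge> N \<Longrightarrow> gdist n \<eta> f (P m) (P k) < 1"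
      using cau[rule_format, OF zero_less_one] by blast
    define x0 where "x0 = fst (P N)"
    define A where "A = sqrt (1 + (\<Sum>j\<le>n. (snd (P N) j)\<^sup>2))"
    define R where "R = A + 2"
    have A0: "0 \<le> A" unfolding A_def by (simp add: sum_nonneg)
    have R0: "0 \<le> R" using A0 unfolding R_def by simp
    obtain u0 where u0: "u0 \<in> {-R..R}" and u0m: "\<And>y. y \<in> {-R..R} \<Longrightarrow> r u0 \<le> r y"
    proof -
      have "\<exists>x\<in>{-R..R}. \<forall>y\<in>{-R..R}. r x \<le> r y"
        by (rule continuous_attains_inf[OF compact_Icc]) (use R0 continuous_on_subset[OF r_cont subset_UNIV] in auto)
      thus ?thesis using that by blast
    qed
    define M0 where "M0 = r u0"
    have M0: "0 < M0" unfolding M0_def using r_pos by simp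
    have etalow: "M0 \<le> \<eta> x u" if "\<bar>u\<bar> \<le> R" for x u
    proof -
      have "r u \<le> \<eta> x u" by (rule eta_ge)
      moreover have "r u0 \<le> r u" using u0m[of u] that by (auto simp: abs_le_iff)
      ultimately show ?thesis unfolding M0_def by linarith
    qed
    define B where "B = 2 / M0"
    have B0: "0 \<le> B" using M0 unfolding B_def by simp
    obtain xF where xF: "xF \<in> {x0 - B..x0 + B}"
      and xFm: "\<And>y. y \<in> {x0 - B..x0 + B} \<Longrightarrow> (\<Sum>j\<in>{1..n}. \<bar>f j y\<bar>) \<le> (\<Sum>j\<in>{1..n}. \<bar>f j xF\<bar>)"
    proof -
      have "continuous_on {x0 - B..x0 + B} (\<lambda>y. \<Sum>j\<in>{1..n}. \<bar>f j y\<bar>)"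
        by (intro continuous_intros continuous_on_subset[OF fcj subset_UNIV]) auto
      moreover have "{x0 - B..x0 + B} \<noteq> {}" using B0 by simp
      ultimately have "\<exists>x\<in>{x0 - B..x0 + B}. \<forall>y\<in>{x0 - B..x0 + B}. (\<Sum>j\<in>{1..n}. \<bar>f j y\<bar>) \<le> (\<Sum>j\<in>{1..n}. \<bar>f j x\<bar>)"
        using continuous_attains_sup[OF compact_Icc] by blast
      thus ?thesis using that by blast
    qed
    define F where "F = (\<Sum>j\<in>{1..n}. \<bar>f j xF\<bar>)"
    have F0: "0 \<le> F" unfolding F_def by (simp add: sum_nonneg)
    have fbound: "\<bar>fext n f j y\<bar> \<le> F" if "y \<in> {x0 - B..x0 + B}" for j y
    proof (cases "1 \<le> j \<and> j \<le> n")
      case True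
      have "\<bar>f j y\<bar> \<le> (\<Sum>j\<in>{1..n}. \<bar>f j y\<bar>)" by (rule member_le_sum) (use True in auto)
      also have "\<dots> \<le> F" unfolding F_def by (rule xFm[OF that])
      finally show ?thesis using True by (simp add: fext_def)
    next
      case False then show ?thesis using F0 unfolding fext_def by auto
    qed
    obtain zH where zH: "zH \<in> {x0 - B..x0 + B} \<times> {-R..R}"
      and zHm: "\<And>z. z \<in> {x0 - B..x0 + B} \<times> {-R..R} \<Longrightarrow> (\<lambda>(x, u). \<eta> x u) z \<le> (\<lambda>(x, u). \<eta> x u) zH"
    proof -
      have "compact ({x0 - B..x0 + B} \<times> {-R..R})" by (intro compact_Times compact_Icc)
      moreover have "{x0 - B..x0 + B} \<times> {-R..R} \<noteq> {}" using B0 R0 by simp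
      moreover have "continuous_on ({x0 - B..x0 + B} \<times> {-R..R}) (\<lambda>(x, u). \<eta> x u)"
        using continuous_on_subset[OF ec subset_UNIV] .
      ultimately have "\<exists>z\<in>{x0 - B..x0 + B} \<times> {-R..R}. \<forall>y\<in>{x0 - B..x0 + B} \<times> {-R..R}. (\<lambda>(x, u). \<eta> x u) y \<le> (\<lambda>(x, u). \<eta> x u) z"
        by (rule continuous_attains_sup)
      thus ?thesis using that by blast
    qed
    define H where "H = (\<lambda>(x, u). \<eta> x u) zH"
    have hbound: "\<eta> x u \<le> H" if "x \<in> {x0 - B..x0 + B}" "\<bar>u\<bar> \<le> R" for x u
      using zHm[of "(x, u)"] that unfolding H_def by (auto simp: abs_le_iff)
    have claim1: "\<bar>fst (P m) - x0\<bar> \<le> 1 / M0 \<and> sqrt (1 + (\<Sum>j\<le>n. (snd (P m) j)\<^sup>2)) \<le> A + 1"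
      if m: "m \<ge> N" for m
    proof -
      obtain X V where cv: "(X, V) \<in> curves n (P N) (P m)" and L: "glength n \<eta> f X V < 1"
        using gdist_lessD[OF N[OF order_refl m]] by blast
      have X1: "X 1 = fst (P m)" and V1: "\<And>j. j \<le> n \<Longrightarrow> V j 1 = snd (P m) j"
        using cv unfolding curves_def by auto
      have rb: "sqrt (1 + (\<Sum>j\<le>n. (V j t)\<^sup>2)) \<le> A + 1" if t: "t \<in> {0..1}" for t
        using rho_bound[OF ec fc cv t] L unfolding A_def x0_def by simp
      have eb: "M0 \<le> \<eta> (X s) (V 0 s)" if s: "s \<in> {0..1}" for s
        using comp_le_sqrt[of 0 n "\<lambda>j. V j s"] rb[OF s] by (intro etalow) (simp add: R_def)
      have "\<bar>X 1 - fst (P N)\<bar> \<le> glength n \<eta> f X V / M0"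
        by (rule x_bound[OF ec fc cv M0 eb]) auto
      also have "\<dots> \<le> 1 / M0" using L M0 by (simp add: divide_right_mono)
      finally have "\<bar>fst (P m) - x0\<bar> \<le> 1 / M0" unfolding X1 x0_def .
      moreover have "sqrt (1 + (\<Sum>j\<le>n. (snd (P m) j)\<^sup>2)) \<le> A + 1"
        using rb[of 1] V1 by simp
      ultimately show ?thesis by blast
    qed
    define C1 where "C1 = 1 + 2 * R * F / M0"
    have C1: "1 \<le> C1" unfolding C1_def using R0 F0 M0 by simp
    have claim2: "\<bar>fst (P k) - fst (P m)\<bar> \<le> glength n \<eta> f X V / M0 \<and>
        (\<forall>j\<le>n. \<bar>snd (P k) j - snd (P m) j\<bar> \<le> C1 * glength n \<eta> f X V)"
      if m: "m \<ge> N" and cv: "(X, V) \<in> curves n (P m) (P k)" and L: "glength n \<eta> f X V < 1" for m k X V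
    proof -
      have X1: "X 1 = fst (P k)" and V1: "\<And>j. j \<le> n \<Longrightarrow> V j 1 = snd (P k) j"
        using cv unfolding curves_def by auto
      have rb: "sqrt (1 + (\<Sum>j\<le>n. (V j t)\<^sup>2)) \<le> R" if t: "t \<in> {0..1}" for t
        using rho_bound[OF ec fc cv t] L claim1[OF m] unfolding R_def by simp
      have vb: "\<bar>V j s\<bar> \<le> R" if "s \<in> {0..1}" "j \<le> n" for s j
        using comp_le_sqrt[of j n "\<lambda>j. V j s"] rb[OF that(1)] that(2) by simp
      have eb: "M0 \<le> \<eta> (X s) (V 0 s)" if s: "s \<in> {0..1}" for s
        using vb[OF s, of 0] by (intro etalow) simp
      have xb: "\<bar>X s - fst (P m)\<bar> \<le> glength n \<eta> f X V / M0" if s: "s \<in> {0..1}" for s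
        by (rule x_bound[OF ec fc cv M0 eb s])
      have xb1: "glength n \<eta> f X V / M0 \<le> 1 / M0" using L M0 by (simp add: divide_right_mono)
      have inbox: "X s \<in> {x0 - B..x0 + B}" if s: "s \<in> {0..1}" for s
      proof -
        have "\<bar>X s - x0\<bar> \<le> 1 / M0 + 1 / M0"
          using xb[OF s] xb1 claim1[OF m] by linarith
        thus ?thesis unfolding B_def by (auto simp: abs_le_iff)
      qed
      have "\<bar>fst (P k) - fst (P m)\<bar> \<le> glength n \<eta> f X V / M0" using xb[of 1] X1 by simp
      moreover have "\<bar>snd (P k) j - snd (P m) j\<bar> \<le> C1 * glength n \<eta> f X V" if j: "j \<le> n" for j
        using v_bound[OF ec fc cv M0 eb fbound[OF inbox] vb F0 R0 j, of 1] V1[OF j] unfolding C1_def by simp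
      ultimately show ?thesis by blast
    qed
    define C0 where "C0 = 1 / M0 + C1"
    have C0: "0 < C0"
    proof -
      have "0 < 1 / M0" using M0 by simp
      thus ?thesis unfolding C0_def using C1 by linarith
    qed
    have cauchy_step: "\<exists>K. \<forall>m\<ge>K. \<forall>k\<ge>K. \<bar>fst (P k) - fst (P m)\<bar> < e \<and>
         (\<forall>j\<le>n. \<bar>snd (P k) j - snd (P m) j\<bar> < e)" if e: "0 < e" for e
    proof -
      define e' where "e' = min 1 (e / C0)"
      have e': "0 < e'" using e C0 unfolding e'_def by simp
      obtain N1 where N1: "\<And>m k. m \<ge> N1 \<Longrightarrow> k \<ge> N1 \<Longrightarrow> gdist n \<eta> f (P m) (P k) < e'"
        using cau[rule_format, OF e'] by blast
      show ?thesis
      proof (intro exI[of _ "max N N1"] allI impI)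
        fix m k assume mk: "max N N1 \<le> m" "max N N1 \<le> k"
        obtain X V where cv: "(X, V) \<in> curves n (P m) (P k)" and L: "glength n \<eta> f X V < e'"
        proof -
          have "gdist n \<eta> f (P m) (P k) < e'" using N1 mk by simp
          from gdist_lessD[OF this] show ?thesis using that by blast
        qed
        have L1: "glength n \<eta> f X V < 1" using L unfolding e'_def by simp
        have L0: "0 \<le> glength n \<eta> f X V" by (rule glength_nonneg)
        have LC: "C0 * glength n \<eta> f X V < e"
        proof -
          have "glength n \<eta> f X V < e / C0" using L unfolding e'_def by simp
          thus ?thesis using C0 by (simp add: field_simps)
        qed
        have m: "m \<ge> N" using mk by simp
        have "glength n \<eta> f X V / M0 \<le> C0 * glength n \<eta> f X V"
          unfolding C0_def using L0 C1 M0 by (simp add: field_simps)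
        moreover have "C1 * glength n \<eta> f X V \<le> C0 * glength n \<eta> f X V"
          unfolding C0_def using L0 M0 by (intro mult_right_mono) auto
        ultimately show "\<bar>fst (P k) - fst (P m)\<bar> < e \<and> (\<forall>j\<le>n. \<bar>snd (P k) j - snd (P m) j\<bar> < e)"
        proof (intro conjI allI impI)
          assume a1: "glength n \<eta> f X V / M0 \<le> C0 * glength n \<eta> f X V"
            and a2: "C1 * glength n \<eta> f X V \<le> C0 * glength n \<eta> f X V"
          have c2: "\<bar>fst (P k) - fst (P m)\<bar> \<le> glength n \<eta> f X V / M0"
            "\<And>j. j \<le> n \<Longrightarrow> \<bar>snd (P k) j - snd (P m) j\<bar> \<le> C1 * glength n \<eta> f X V"
            using claim2[OF m cv L1] by auto
          show "\<bar>fst (P k) - fst (P m)\<bar> < e" using c2(1) a1 LC by linarith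
          fix j assume j: "j \<le> n"
          show "\<bar>snd (P k) j - snd (P m) j\<bar> < e" using c2(2)[OF j] a2 LC by linarith
        qed
      qed
    qed
    have cx: "Cauchy (\<lambda>k. fst (P k))"
    proof (rule CauchyI)
      fix e :: real assume "0 < e"
      from cauchy_step[OF this] obtain K where K: "\<And>m k. m \<ge> K \<Longrightarrow> k \<ge> K \<Longrightarrow> \<bar>fst (P k) - fst (P m)\<bar> < e"
        by blast
      show "\<exists>M. \<forall>m\<ge>M. \<forall>na\<ge>M. norm (fst (P m) - fst (P na)) < e"
        using K by auto
    qed
    have cvj: "Cauchy (\<lambda>k. snd (P k) j)" if j: "j \<le> n" for j
    proof (rule CauchyI)
      fix e :: real assume "0 < e"
      from cauchy_step[OF this] obtain K where K: "\<And>m k. m \<ge> K \<Longrightarrow> k \<ge> K \<Longrightarrow> \<bar>snd (P k) j - snd (P m) j\<bar> < e"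
        using j by blast
      show "\<exists>M. \<forall>m\<ge>M. \<forall>na\<ge>M. norm (snd (P m) j - snd (P na) j) < e"
        using K by auto
    qed
    obtain xl where xl: "(\<lambda>k. fst (P k)) \<longlonglongrightarrow> xl"
      using cx Cauchy_convergent_iff convergent_def by blast
    define vl where "vl j = (if j \<le> n then lim (\<lambda>k. snd (P k) j) else 0)" for j
    have vl: "(\<lambda>k. snd (P k) j) \<longlonglongrightarrow> vl j" if j: "j \<le> n" for j
      using cvj[OF j] Cauchy_convergent_iff convergent_LIMSEQ_iff j unfolding vl_def by auto
    define p where "p = (xl, vl)"
    have pM: "p \<in> Mpts n" unfolding p_def Mpts_def vl_def by auto
    have xlb: "\<bar>xl - x0\<bar> \<le> 1 / M0"
    proof (rule LIMSEQ_le_const2)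
      show "(\<lambda>k. \<bar>fst (P k) - x0\<bar>) \<longlonglongrightarrow> \<bar>xl - x0\<bar>" by (intro tendsto_intros xl)
      show "\<exists>N'. \<forall>k\<ge>N'. \<bar>fst (P k) - x0\<bar> \<le> 1 / M0" using claim1 by blast
    qed
    have Pvb: "\<bar>snd (P k) j\<bar> \<le> A + 1" if "k \<ge> N" "j \<le> n" for k j
      using claim1[OF that(1)] comp_le_sqrt[OF that(2), of "snd (P k)"] by linarith
    have vlb: "\<bar>vl j\<bar> \<le> A + 1" if j: "j \<le> n" for j
    proof (rule LIMSEQ_le_const2)
      show "(\<lambda>k. \<bar>snd (P k) j\<bar>) \<longlonglongrightarrow> \<bar>vl j\<bar>" by (intro tendsto_intros vl j)
      show "\<exists>N'. \<forall>k\<ge>N'. \<bar>snd (P k) j\<bar> \<le> A + 1" using Pvb j by blast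
    qed
    have B1: "1 / M0 \<le> B" unfolding B_def using M0 by (simp add: divide_right_mono)
    define K where "K = H + real (n + 1) * (2 * R * F)"
    have ev: "gdist n \<eta> f (P k) p \<le> K * \<bar>xl - fst (P k)\<bar> + (\<Sum>j\<le>n. \<bar>vl j - snd (P k) j\<bar>)"
      if k: "k \<ge> N" for k
    proof -
      have xin: "lineX (P k) p t \<in> {x0 - B..x0 + B}" if t: "t \<in> {0..1}" for t
      proof -
        have "\<bar>fst (P k) + t * (xl - fst (P k)) - x0\<bar> \<le> B"
          by (rule convex_abs[OF _ _ t]) (use claim1[OF k] xlb B1 in auto)
        thus ?thesis unfolding lineX_def p_def by (auto simp: abs_le_iff)
      qed
      have vin: "\<bar>lineV (P k) p j t\<bar> \<le> R" if t: "t \<in> {0..1}" and j: "j \<le> n" for t j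
      proof -
        have "\<bar>snd (P k) j + t * (vl j - snd (P k) j) - 0\<bar> \<le> R"
          by (rule convex_abs[OF _ _ t]) (use Pvb[OF k j] vlb[OF j] in \<open>auto simp: R_def\<close>)
        thus ?thesis unfolding lineV_def p_def by simp
      qed
      have "gdist n \<eta> f (P k) p \<le> (H + real (n + 1) * (2 * R * F)) * \<bar>fst p - fst (P k)\<bar> + (\<Sum>j\<le>n. \<bar>snd p j - snd (P k) j\<bar>)"
      proof (rule line_bound[OF ec fc _ _ _ F0 R0])
        fix t :: real assume t: "t \<in> {0..1}"
        show "\<bar>\<eta> (lineX (P k) p t) (lineV (P k) p 0 t)\<bar> \<le> H"
          using hbound[OF xin[OF t] vin[OF t, of 0]] eta_pos[of "lineX (P k) p t" "lineV (P k) p 0 t"] by simp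
      next
        fix t :: real and j assume t: "t \<in> {0..1}"
        show "\<bar>fext n f j (lineX (P k) p t)\<bar> \<le> F" by (rule fbound[OF xin[OF t]])
      next
        fix t :: real and j assume "t \<in> {0..1}" "j \<le> n"
        thus "\<bar>lineV (P k) p j t\<bar> \<le> R" by (rule vin)
      qed
      thus ?thesis unfolding K_def p_def by simp
    qed
    have lim0: "(\<lambda>k. K * \<bar>xl - fst (P k)\<bar> + (\<Sum>j\<le>n. \<bar>vl j - snd (P k) j\<bar>)) \<longlonglongrightarrow> 0"
    proof -
      have a: "(\<lambda>k. xl - fst (P k)) \<longlonglongrightarrow> 0" using tendsto_diff[OF tendsto_const xl, of xl] by simp
      have b: "(\<lambda>k. vl j - snd (P k) j) \<longlonglongrightarrow> 0" if "j \<in> {..n}" for j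
        using tendsto_diff[OF tendsto_const vl, of j "vl j"] that by simp
      have "(\<lambda>k. K * \<bar>xl - fst (P k)\<bar>) \<longlonglongrightarrow> 0"
        by (intro tendsto_mult_right_zero tendsto_rabs_zero a)
      moreover have "(\<lambda>k. \<Sum>j\<le>n. \<bar>vl j - snd (P k) j\<bar>) \<longlonglongrightarrow> 0"
        by (intro tendsto_null_sum tendsto_rabs_zero b)
      ultimately show ?thesis using tendsto_add_zero by blast
    qed
    have "(\<lambda>k. gdist n \<eta> f (P k) p) \<longlonglongrightarrow> 0"
    proof (rule tendsto_sandwich[OF _ _ tendsto_const lim0])
      show "\<forall>\<^sub>F k in sequentially. 0 \<le> gdist n \<eta> f (P k) p" by (simp add: gdist_nonneg)
      show "\<forall>\<^sub>F k in sequentially. gdist n \<eta> f (P k) p \<le> K * \<bar>xl - fst (P k)\<bar> + (\<Sum>j\<le>n. \<bar>vl j - snd (P k) j\<bar>)"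
        using ev eventually_sequentially by blast
    qed
    thus "\<exists>p\<in>Mpts n. (\<lambda>k. gdist n \<eta> f (P k) p) \<longlonglongrightarrow> 0" using pM by blast
  qed
qed

end
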